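(* Fix $\alpha\in(0,1/2]$ and positive integers $a,n$ with $n\ge \max\{1000(\log(a)+1)/\alpha,\ a+1\}$. Let $A,B$ be disjoint sets with $|A|=a$, $|B|=n$, and let $G$ be the random bipartite graph between $A$ and $B$ in which each of the $an$ pairs is an edge independently with probability $4\alpha/3$. Then with probability at least $1-1/e$ the following property holds: for every nonempty $U\subseteq B$, the number of vertices $y\in A$ with $|U\cap N(y)|>2\alpha|U|$ is at most $24n/(\alpha|U|)$.
   Context: $N(y)$ is the neighbourhood of $y$ in $G$; $\log$ is the natural logarithm. *)

theory Defs
  imports "HOL-Probability.Probability"
begin

definition random_bipartite :: "'a set \<Rightarrow> 'a set \<Rightarrow> real \<Rightarrow> ('a \<times> 'a \<Rightarrow> bool) pmf" where
  "random_bipartite A B p = Pi_pmf (A \<times> B) False (\<lambda>_. bernoulli_pmf p)"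

definition nbhd :: "'a set \<Rightarrow> ('a \<times> 'a \<Rightarrow> bool) \<Rightarrow> 'a \<Rightarrow> 'a set" where
  "nbhd B E y = {b \<in> B. E (y, b)}"

end

theory Submission
  imports Defs
begin

lemma exp_half_le: "exp (1/2::real) \<le> 53/32"
proof -
  have "exp (1/2::real)^2 = exp 1" by (simp flip: exp_of_nat_mult)
  also have "\<dots> < 272/100" by (rule e_less_272)
  also have "\<dots> \<le> (53/32)^2" by (simp add: power2_eq_square)
  finally show ?thesis by (rule power2_le_imp_le[OF less_imp_le]) simp
qed

lemma ev_bound:
  fixes \<alpha> :: real and A B U S :: "'a set"
  assumes "0 < \<alpha>" "\<alpha> \<le> 1/2" "finite A" "finite B" "U \<subseteq> B" "S \<subseteq> A"
  shows "measure_pmf.prob (random_bipartite A B (4 * \<alpha> / 3))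
           {E. \<forall>y\<in>S. real (card (U \<inter> nbhd B E y)) > 2 * \<alpha> * real (card U)}
         \<le> exp (- (\<alpha> * real (card U) * real (card S)) / 8)"
proof -
  define p where "p = 4 * \<alpha> / 3"
  have p0: "0 \<le> p" and p1: "p \<le> 1" using assms by (auto simp: p_def)
  define t where "t = exp (1/2::real)"
  have t1: "1 \<le> t" by (simp add: t_def)
  define M where "M = random_bipartite A B p"
  define g where "g = (\<lambda>E::'a\<times>'a\<Rightarrow>bool. \<Prod>e\<in>A\<times>B. (if e \<in> S\<times>U \<and> E e then t else 1))"
  define m where "m = card S * card U"
  have finAB: "finite (A \<times> B)" using assms by simp
  have SU: "S \<times> U \<subseteq> A \<times> B" using assms by auto
  have finSU: "finite (S \<times> U)" using SU finAB finite_subset by blast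
  have finU: "finite U" using assms finite_subset by blast
  have finS: "finite S" using assms finite_subset by blast
  have Eg: "measure_pmf.expectation M g = (1 + p * (t - 1)) ^ m"
  proof -
    have "measure_pmf.expectation M g =
      (\<Prod>e\<in>A\<times>B. measure_pmf.expectation (bernoulli_pmf p) (\<lambda>v. if e \<in> S\<times>U \<and> v then t else 1))"
      unfolding M_def random_bipartite_def g_def
      by (rule expectation_prod_Pi_pmf[where f = "\<lambda>e v. if e \<in> S\<times>U \<and> v then t else 1"])
         (use finAB t1 in \<open>auto intro: integrable_measure_pmf_finite\<close>)
    also have "\<dots> = (\<Prod>e\<in>A\<times>B. (if e \<in> S\<times>U then 1 + p * (t - 1) else 1))"
      using p0 p1 by (intro prod.cong) (auto simp: algebra_simps)
    also have "\<dots> = (1 + p * (t - 1)) ^ m"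
      using SU finAB by (subst prod.If_cases) (auto simp: m_def card_cartesian_product Int_absorb1 Int_absorb2)
    finally show ?thesis .
  qed
  have gpos: "0 \<le> g E" for E unfolding g_def using t1 by (intro prod_nonneg) auto
  have gint: "integrable M g"
    unfolding M_def random_bipartite_def g_def
    by (rule integrable_prod_Pi_pmf[where f = "\<lambda>e v. if e \<in> S\<times>U \<and> v then t else 1"]) (use finAB in \<open>auto intro: integrable_measure_pmf_finite\<close>)
  have sub: "{E. \<forall>y\<in>S. real (card (U \<inter> nbhd B E y)) > 2 * \<alpha> * real (card U)}
        \<subseteq> {E\<in>space M. g E \<ge> exp (\<alpha> * real m)}"
  proof safe
    fix E assume H: "\<forall>y\<in>S. real (card (U \<inter> nbhd B E y)) > 2 * \<alpha> * real (card U)"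
    have "g E = (\<Prod>e\<in>S\<times>U. (if E e then t else 1))"
      unfolding g_def using SU finAB
      by (intro prod.mono_neutral_cong_right) auto
    also have "\<dots> = (\<Prod>y\<in>S. \<Prod>b\<in>U. (if E (y,b) then t else 1))"
      by (simp add: prod.cartesian_product)
    also have "\<dots> = (\<Prod>y\<in>S. exp (real (card (U \<inter> nbhd B E y)) / 2))"
    proof (intro prod.cong refl)
      fix y assume "y \<in> S"
      have "(\<Prod>b\<in>U. (if E (y,b) then t else 1)) = t ^ card (U \<inter> {b. E (y,b)})"
        using finU by (subst prod.If_cases) auto
      also have "U \<inter> {b. E (y,b)} = U \<inter> nbhd B E y"
        using assms(5) by (auto simp: nbhd_def)
      also have "t ^ card (U \<inter> nbhd B E y) = exp (real (card (U \<inter> nbhd B E y)) / 2)"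
        unfolding t_def by (simp flip: exp_of_nat_mult)
      finally show "(\<Prod>b\<in>U. (if E (y,b) then t else 1)) = exp (real (card (U \<inter> nbhd B E y)) / 2)" .
    qed
    also have "\<dots> \<ge> (\<Prod>y\<in>S. exp (\<alpha> * real (card U)))"
      using H by (intro prod_mono) auto
    moreover have "(\<Prod>y\<in>S. exp (\<alpha> * real (card U))) = exp (\<alpha> * real m)"
      by (simp add: m_def flip: exp_of_nat_mult)
    ultimately show "exp (\<alpha> * real m) \<le> g E" by simp
  qed (simp add: M_def)
  have ge1: "p * (t - 1) + 1 \<le> exp (p * (t - 1))" "1 + p * (t - 1) \<le> exp (p * (t - 1))"
    using exp_ge_add_one_self[of "p * (t - 1)"] by (simp_all add: add.commute)
  have "measure_pmf.prob M {E. \<forall>y\<in>S. real (card (U \<inter> nbhd B E y)) > 2 * \<alpha> * real (card U)}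
        \<le> measure_pmf.prob M {E\<in>space M. g E \<ge> exp (\<alpha> * real m)}"
    by (rule measure_pmf.finite_measure_mono[OF sub]) simp
  also have "\<dots> \<le> measure_pmf.expectation M g / exp (\<alpha> * real m)"
    by (rule integral_Markov_inequality_measure[OF gint]) (auto simp: gpos)
  also have "\<dots> = (1 + p * (t - 1)) ^ m / exp (\<alpha> * real m)" by (simp add: Eg)
  also have "\<dots> \<le> exp (p * (t - 1)) ^ m / exp (\<alpha> * real m)"
    using p0 t1 by (intro divide_right_mono power_mono) (auto simp: ge1)
  also have "\<dots> = exp ((p * (t - 1) - \<alpha>) * real m)"
    by (simp add: exp_diff left_diff_distrib flip: exp_of_nat_mult)
  also have "\<dots> \<le> exp (- (\<alpha> * real (card U) * real (card S)) / 8)"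
  proof -
    have "t - 1 \<le> 21/32" using exp_half_le by (simp add: t_def)
    hence "p * (t - 1) \<le> p * (21/32)" using p0 by (intro mult_left_mono) auto
    hence "p * (t - 1) - \<alpha> \<le> - \<alpha> / 8" by (simp add: p_def)
    hence "(p * (t - 1) - \<alpha>) * real m \<le> (- \<alpha> / 8) * real m" by (intro mult_right_mono) auto
    thus ?thesis by (simp add: m_def algebra_simps)
  qed
  finally show ?thesis by (simp add: M_def p_def)
qed

theorem mainTheorem9:
  fixes \<alpha> :: real and a n :: nat and A B :: "'a set"
  assumes "0 < \<alpha>" "\<alpha> \<le> 1/2"
    and "0 < a" "0 < n"
    and "real n \<ge> 1000 * (ln (real a) + 1) / \<alpha>" "n \<ge> a + 1"
    and "finite A" "finite B" "A \<inter> B = {}" "card A = a" "card B = n"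
  shows "measure_pmf.prob (random_bipartite A B (4 * \<alpha> / 3))
           {E. \<forall>U. U \<subseteq> B \<and> U \<noteq> {} \<longrightarrow>
               real (card {y \<in> A. real (card (U \<inter> nbhd B E y)) > 2 * \<alpha> * real (card U)})
                 \<le> 24 * real n / (\<alpha> * real (card U))}
         \<ge> 1 - 1 / exp 1"
proof -
  define M where "M = random_bipartite A B (4 * \<alpha> / 3)"
  define G where "G = {E. \<forall>U. U \<subseteq> B \<and> U \<noteq> {} \<longrightarrow>
               real (card {y \<in> A. real (card (U \<inter> nbhd B E y)) > 2 * \<alpha> * real (card U)})
                 \<le> 24 * real n / (\<alpha> * real (card U))}"
  define I where "I = {(U,S). U \<subseteq> B \<and> U \<noteq> {} \<and> S \<subseteq> A \<and> real (card S) > 24 * real n / (\<alpha> * real (card U))}"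
  define Ev where "Ev = (\<lambda>(U,S). {E. \<forall>y\<in>S. real (card (U \<inter> nbhd B E y)) > 2 * \<alpha> * real (card U)})"
  have Isub: "I \<subseteq> Pow B \<times> Pow A" by (auto simp: I_def)
  have finI: "finite I" using Isub assms(7,8) finite_subset by (metis finite_Pow_iff finite_SigmaI)
  have cardI: "real (card I) \<le> 4 ^ n"
  proof -
    have "card I \<le> card (Pow B \<times> Pow A)" using Isub assms(7,8) by (intro card_mono) auto
    also have "\<dots> = 2 ^ n * 2 ^ a" using assms(7,8,10,11) by (simp add: card_cartesian_product card_Pow)
    also have "\<dots> \<le> 2 ^ n * 2 ^ n" using assms(6) by (intro mult_left_mono power_increasing) auto
    also have "\<dots> = 4 ^ n" by (simp flip: power_mult_distrib)
    finally show ?thesis by (metis of_nat_le_iff of_nat_numeral of_nat_power)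
  qed
  have cover: "UNIV - G \<subseteq> (\<Union>i\<in>I. Ev i)"
  proof
    fix E assume "E \<in> UNIV - G"
    then obtain U where U: "U \<subseteq> B" "U \<noteq> {}"
      and c: "real (card {y \<in> A. real (card (U \<inter> nbhd B E y)) > 2 * \<alpha> * real (card U)})
                 > 24 * real n / (\<alpha> * real (card U))" by (auto simp: G_def not_le)
    let ?S = "{y \<in> A. real (card (U \<inter> nbhd B E y)) > 2 * \<alpha> * real (card U)}"
    have "(U, ?S) \<in> I" using U c by (auto simp: I_def)
    moreover have "E \<in> Ev (U, ?S)" by (auto simp: Ev_def)
    ultimately show "E \<in> (\<Union>i\<in>I. Ev i)" by blast
  qed
  have evb: "measure_pmf.prob M (Ev i) \<le> exp (- 3 * real n)" if "i \<in> I" for i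
  proof -
    obtain U S where i: "i = (U,S)" by force
    have U: "U \<subseteq> B" "U \<noteq> {}" "S \<subseteq> A" and c: "real (card S) > 24 * real n / (\<alpha> * real (card U))"
      using that by (auto simp: I_def i)
    have finU: "finite U" using U assms(8) finite_subset by blast
    hence cu: "real (card U) > 0" using U by (simp add: card_gt_0_iff)
    have "24 * real n < real (card S) * (\<alpha> * real (card U))"
      using c cu assms(1) by (simp add: pos_divide_less_eq)
    hence le: "- (\<alpha> * real (card U) * real (card S)) / 8 \<le> - 3 * real n"
      by (simp add: algebra_simps)
    have "measure_pmf.prob M (Ev i) \<le> exp (- (\<alpha> * real (card U) * real (card S)) / 8)"
      unfolding M_def i Ev_def using ev_bound[OF assms(1,2,7,8) U(1,3)] by simp
    also have "\<dots> \<le> exp (- 3 * real n)" using le by simp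
    finally show ?thesis .
  qed
  have "measure_pmf.prob M (UNIV - G) \<le> measure_pmf.prob M (\<Union>i\<in>I. Ev i)"
    by (rule measure_pmf.finite_measure_mono[OF cover]) simp
  also have "\<dots> \<le> (\<Sum>i\<in>I. measure_pmf.prob M (Ev i))"
    by (rule measure_pmf.finite_measure_subadditive_finite[OF finI]) simp
  also have "\<dots> \<le> (\<Sum>i\<in>I. exp (- 3 * real n))" by (intro sum_mono evb)
  also have "\<dots> = real (card I) * exp (- 3 * real n)" by simp
  also have "\<dots> \<le> 4 ^ n * exp (- 3 * real n)" using cardI by (intro mult_right_mono) auto
  also have "\<dots> \<le> exp 2 ^ n * exp (- 3 * real n)"
  proof -
    have "(4::real) \<le> 1 + 2 + 2^2/2" by simp
    also have "\<dots> \<le> exp 2" by (rule exp_lower_Taylor_quadratic) simp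
    finally show ?thesis by (intro mult_right_mono power_mono) auto
  qed
  also have "\<dots> = exp (- real n)" by (simp flip: exp_of_nat_mult exp_add)
  also have "\<dots> \<le> exp (- 1)" using assms(4) by simp
  finally have bad: "measure_pmf.prob M (UNIV - G) \<le> exp (-1)" .
  have "measure_pmf.prob M (UNIV - G) = 1 - measure_pmf.prob M G"
    using measure_pmf.prob_compl[of G M] by simp
  with bad have "measure_pmf.prob M G \<ge> 1 - exp (-1)" by simp
  thus ?thesis by (simp add: M_def G_def exp_minus field_simps)
qed

end
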